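(* Let $m\ge2$ be even, $n\ge2$, and let $g,h\in\mathbb{R}$ with $h\neq0$ and $g/h\notin\mathbb{Z}$. Let $\mathcal{A}$ be the Cauchy-Hankel tensor of order $m$ and dimension $n$ with entries $a_{i_1\cdots i_m}=\frac{1}{g+h(i_1+\cdots+i_m)}$, and let $f(x)=\mathcal{A}x^m$. Then $\mathcal{A}$ is positive definite if and only if $f$ is strictly monotonically increasing on $\mathbb{R}^n_+$.
   Context: $\mathcal{A}x^m=\sum_{i_1,\dots,i_m}a_{i_1\cdots i_m}x_{i_1}\cdots x_{i_m}$. Positive definite: $\mathcal{A}x^m>0$ for all nonzero $x\in\mathbb{R}^n$. $\mathbb{R}^n_+=\{x\in\mathbb{R}^n: x_i\ge0\ \forall i\}$; for vectors, $x\ge y$ means $x_i\ge y_i$ for all $i$. $f$ is strictly monotonically increasing on $\mathbb{R}^n_+$ if $f(x)>f(y)$ for all $x,y\in\mathbb{R}^n_+$ with $x\ge y$ and $x\neq y$. *)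

theory Defs
  imports Complex_Main "HOL-Library.FuncSet"
begin

text \<open>Vectors in R^n are represented as functions nat => real, only the
components 1..n being relevant. A tensor of order m and dimension n is a
function A assigning to each index tuple (i_1,...,i_m), i.e. a function
iota : {1..m} -> {1..n} (extensional), a real entry.\<close>

definition tensor_form :: "nat \<Rightarrow> nat \<Rightarrow> ((nat \<Rightarrow> nat) \<Rightarrow> real) \<Rightarrow> (nat \<Rightarrow> real) \<Rightarrow> real" where
  "tensor_form m n A x = (\<Sum>\<iota>\<in>{1..m} \<rightarrow>\<^sub>E {1..n}. A \<iota> * (\<Prod>k=1..m. x (\<iota> k)))"

definition cauchy_hankel :: "nat \<Rightarrow> real \<Rightarrow> real \<Rightarrow> (nat \<Rightarrow> nat) \<Rightarrow> real" where
  "cauchy_hankel m g h \<iota> = 1 / (g + h * real (\<Sum>k=1..m. \<iota> k))"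

definition nonzero_vec :: "nat \<Rightarrow> (nat \<Rightarrow> real) \<Rightarrow> bool" where
  "nonzero_vec n x \<longleftrightarrow> (\<exists>i\<in>{1..n}. x i \<noteq> 0)"

definition positive_definite :: "nat \<Rightarrow> nat \<Rightarrow> ((nat \<Rightarrow> nat) \<Rightarrow> real) \<Rightarrow> bool" where
  "positive_definite m n A \<longleftrightarrow> (\<forall>x. nonzero_vec n x \<longrightarrow> tensor_form m n A x > 0)"

definition nonneg_vec :: "nat \<Rightarrow> (nat \<Rightarrow> real) \<Rightarrow> bool" where
  "nonneg_vec n x \<longleftrightarrow> (\<forall>i\<in>{1..n}. 0 \<le> x i)"

definition strict_mono_incr_Rn_plus :: "nat \<Rightarrow> ((nat \<Rightarrow> real) \<Rightarrow> real) \<Rightarrow> bool" where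
  "strict_mono_incr_Rn_plus n f \<longleftrightarrow>
     (\<forall>x y. nonneg_vec n x \<and> nonneg_vec n y \<and> (\<forall>i\<in>{1..n}. y i \<le> x i)
            \<and> (\<exists>i\<in>{1..n}. x i \<noteq> y i) \<longrightarrow> f x > f y)"

end

theory Submission
  imports Defs "HOL-Analysis.Analysis"
begin

lemma poly_zero_aux:
  fixes x :: "nat \<Rightarrow> real" and h :: real
  assumes Z: "\<forall>t\<in>{1/2..1::real}. (\<Sum>i=1..n. x i * t powr (h*real i)) = 0" and h: "h \<noteq> 0"
  shows "\<forall>i\<in>{1..n}. x i = 0"
proof -
  define c where "c i = (if i = 0 then 0 else x i)" for i
  have sub: "(\<lambda>t. t powr h) ` {1/2..1} \<subseteq> {u. (\<Sum>i\<le>n. c i * u^i) = 0}"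
  proof
    fix u assume "u \<in> (\<lambda>t. t powr h) ` {1/2..1::real}"
    then obtain t where t: "t \<in> {1/2..1}" "u = t powr h" by auto
    have "{..n} = insert 0 {1..n}" by auto
    then have "(\<Sum>i\<le>n. c i * u^i) = (\<Sum>i=1..n. x i * u^i)"
      by (simp add: c_def)
    also have "\<dots> = (\<Sum>i=1..n. x i * t powr (h*real i))"
      using t by (intro sum.cong refl) (simp add: powr_power mult.commute)
    also have "\<dots> = 0" using Z t by auto
    finally show "u \<in> {u. (\<Sum>i\<le>n. c i * u^i) = 0}" by simp
  qed
  have inj: "inj_on (\<lambda>t. t powr h) {1/2..1::real}"
  proof (rule inj_onI)
    fix s t :: real assume "s \<in> {1/2..1}" "t \<in> {1/2..1}" "s powr h = t powr h"
    then have "(s powr h) powr (1/h) = (t powr h) powr (1/h)" by simp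
    then show "s = t" using h \<open>s \<in> _\<close> \<open>t \<in> _\<close> by (simp add: powr_powr)
  qed
  have "infinite ((\<lambda>t. t powr h) ` {1/2..1::real})"
    using inj by (simp add: finite_image_iff)
  then have "infinite {u. (\<Sum>i\<le>n. c i * u^i) = 0}" using sub finite_subset by blast
  then have "\<not> (\<exists>i\<le>n. c i \<noteq> 0)" using polyfun_finite_roots by blast
  then show ?thesis by (auto simp: c_def)
qed

lemma expand_aux:
  fixes x :: "nat \<Rightarrow> real" and t :: real
  assumes t: "t > 0"
  shows "t powr (g-1) * (\<Sum>i=1..n. x i * t powr (h*real i))^m
       = (\<Sum>\<iota>\<in>{1..m} \<rightarrow>\<^sub>E {1..n}. (\<Prod>k=1..m. x (\<iota> k)) * t powr (g - 1 + h * real (\<Sum>k=1..m. \<iota> k)))"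
proof -
  have "(\<Sum>i=1..n. x i * t powr (h*real i))^m = (\<Prod>k\<in>{1..m}. \<Sum>i\<in>{1..n}. x i * t powr (h*real i))"
    by simp
  also have "\<dots> = (\<Sum>\<iota>\<in>{1..m} \<rightarrow>\<^sub>E {1..n}. \<Prod>k\<in>{1..m}. x (\<iota> k) * t powr (h*real (\<iota> k)))"
    by (rule prod_sum_PiE) auto
  also have "\<dots> = (\<Sum>\<iota>\<in>{1..m} \<rightarrow>\<^sub>E {1..n}. (\<Prod>k=1..m. x (\<iota> k)) * t powr (h * real (\<Sum>k=1..m. \<iota> k)))"
  proof (intro sum.cong refl)
    fix \<iota> :: "nat \<Rightarrow> nat"
    have "(\<Prod>k\<in>{1..m}. x (\<iota> k) * t powr (h*real (\<iota> k))) = (\<Prod>k=1..m. x (\<iota> k)) * (\<Prod>k=1..m. t powr (h*real (\<iota> k)))"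
      by (rule prod.distrib)
    also have "(\<Prod>k=1..m. t powr (h*real (\<iota> k))) = t powr (\<Sum>k=1..m. h*real (\<iota> k))"
      using t by (simp add: powr_sum)
    also have "(\<Sum>k=1..m. h*real (\<iota> k)) = h * real (\<Sum>k=1..m. \<iota> k)"
      by (simp add: sum_distrib_left)
    finally show "(\<Prod>k\<in>{1..m}. x (\<iota> k) * t powr (h*real (\<iota> k))) = (\<Prod>k=1..m. x (\<iota> k)) * t powr (h * real (\<Sum>k=1..m. \<iota> k))" .
  qed
  finally have e: "(\<Sum>i=1..n. x i * t powr (h*real i))^m = (\<Sum>\<iota>\<in>{1..m} \<rightarrow>\<^sub>E {1..n}. (\<Prod>k=1..m. x (\<iota> k)) * t powr (h * real (\<Sum>k=1..m. \<iota> k)))" .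
  show ?thesis unfolding e sum_distrib_left
    by (intro sum.cong refl) (simp add: powr_add)
qed

lemma integral_repr:
  fixes x :: "nat \<Rightarrow> real"
  assumes pos: "\<forall>\<iota>\<in>{1..m} \<rightarrow>\<^sub>E {1..n}. g + h*real(\<Sum>k=1..m. \<iota> k) > 0"
  shows "((\<lambda>t. t powr (g-1) * (\<Sum>i=1..n. x i * t powr (h*real i))^m) has_integral tensor_form m n (cauchy_hankel m g h) x) {0..1}"
proof -
  have I: "((\<lambda>t. \<Sum>\<iota>\<in>{1..m} \<rightarrow>\<^sub>E {1..n}. (\<Prod>k=1..m. x (\<iota> k)) * t powr (g - 1 + h * real (\<Sum>k=1..m. \<iota> k)))
     has_integral (\<Sum>\<iota>\<in>{1..m} \<rightarrow>\<^sub>E {1..n}. (\<Prod>k=1..m. x (\<iota> k)) * (1 / (g + h * real (\<Sum>k=1..m. \<iota> k))))) {0..1}"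
  proof (rule has_integral_sum)
    show "finite ({1..m} \<rightarrow>\<^sub>E {1..n})" by (simp add: finite_PiE)
    fix \<iota> assume "\<iota> \<in> {1..m} \<rightarrow>\<^sub>E {1..n}"
    then have p: "g + h*real(\<Sum>k=1..m. \<iota> k) > 0" using pos by blast
    have "((\<lambda>t. t powr (g - 1 + h * real (\<Sum>k=1..m. \<iota> k))) has_integral
        (1 powr ((g - 1 + h * real (\<Sum>k=1..m. \<iota> k)) + 1) / ((g - 1 + h * real (\<Sum>k=1..m. \<iota> k)) + 1))) {0..1}"
      by (rule has_integral_powr_from_0) (use p in auto)
    then have "((\<lambda>t. t powr (g - 1 + h * real (\<Sum>k=1..m. \<iota> k))) has_integral
        (1 / (g + h * real (\<Sum>k=1..m. \<iota> k)))) {0..1}" by simp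
    then show "((\<lambda>t. (\<Prod>k=1..m. x (\<iota> k)) * t powr (g - 1 + h * real (\<Sum>k=1..m. \<iota> k))) has_integral
        (\<Prod>k=1..m. x (\<iota> k)) * (1 / (g + h * real (\<Sum>k=1..m. \<iota> k)))) {0..1}"
      by (rule has_integral_mult_right)
  qed
  have "((\<lambda>t. t powr (g-1) * (\<Sum>i=1..n. x i * t powr (h*real i))^m) has_integral
      (\<Sum>\<iota>\<in>{1..m} \<rightarrow>\<^sub>E {1..n}. (\<Prod>k=1..m. x (\<iota> k)) * (1 / (g + h * real (\<Sum>k=1..m. \<iota> k))))) {0..1}"
    by (rule has_integral_spike[OF negligible_sing[of 0] _ I]) (use expand_aux[where g=g and x=x and n=n and h=h and m=m] in \<open>simp del: of_nat_sum\<close>)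
  then show ?thesis
    unfolding tensor_form_def cauchy_hankel_def by (simp add: mult.commute)
qed

lemma pd_of_pos:
  fixes x :: "nat \<Rightarrow> real"
  assumes pos: "\<forall>\<iota>\<in>{1..m} \<rightarrow>\<^sub>E {1..n}. g + h*real(\<Sum>k=1..m. \<iota> k) > 0"
    and ev: "even m" and m: "m \<ge> 2" and h: "h \<noteq> 0" and nz: "nonzero_vec n x"
  shows "tensor_form m n (cauchy_hankel m g h) x > 0"
proof -
  define P where "P t = (\<Sum>i=1..n. x i * t powr (h*real i))" for t :: real
  define F where "F t = t powr (g-1) * (P t)^m" for t :: real
  have HI: "(F has_integral tensor_form m n (cauchy_hankel m g h) x) {0..1}"
    unfolding F_def P_def by (rule integral_repr[OF pos])
  have nn: "0 \<le> F t" for t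
    unfolding F_def using ev by (simp add: zero_le_even_power)
  have cont: "continuous_on {1/2..1} F"
    unfolding F_def P_def by (intro continuous_intros) auto
  have int1: "F integrable_on {1/2..1}"
    using cont by (simp add: integrable_continuous_interval)
  have le: "integral {1/2..1} F \<le> integral {0..1} F"
    by (rule integral_subset_le) (use int1 HI nn in auto)
  have ge: "integral {1/2..1} F \<ge> 0"
    by (rule integral_nonneg) (use int1 nn in auto)
  have "integral {1/2..1} F \<noteq> 0"
  proof
    assume z: "integral {1/2..1} F = 0"
    have "\<forall>t\<in>{1/2..1::real}. P t = 0"
    proof
      fix t :: real assume t: "t \<in> {1/2..1}"
      have I0: "(F has_integral 0) (cbox (1/2) 1)"
        using int1 z by (metis cbox_interval has_integral_integrable_integral)
      have "F t = 0"
        by (rule has_integral_0_cbox_imp_0[of "1/2" 1 F t, OF _ _ I0]) (use cont nn t in \<open>auto simp: cbox_interval\<close>)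
      then show "P t = 0" using t unfolding F_def by simp
    qed
    then have "\<forall>i\<in>{1..n}. x i = 0"
      using poly_zero_aux h unfolding P_def by blast
    then show False using nz unfolding nonzero_vec_def by blast
  qed
  then show ?thesis using le ge HI by (auto simp: integral_unique)
qed

lemma diag_form:
  fixes A :: "(nat \<Rightarrow> nat) \<Rightarrow> real"
  assumes i: "i \<in> {1..n}"
  shows "tensor_form m n A (\<lambda>j. if j = i then c else 0) = A (\<lambda>k\<in>{1..m}. i) * c ^ m"
proof -
  define D where "D = (\<lambda>k\<in>{1..m}. i)"
  have DM: "D \<in> {1..m} \<rightarrow>\<^sub>E {1..n}" using i by (simp add: D_def)
  have pr: "(\<Prod>k=1..m. (\<lambda>j. if j = i then c else 0) (\<iota> k)) = (if \<iota> = D then c ^ m else 0)"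
    if "\<iota> \<in> {1..m} \<rightarrow>\<^sub>E {1..n}" for \<iota>
  proof (cases "\<iota> = D")
    case True
    then show ?thesis by (simp add: D_def)
  next
    case False
    have "\<exists>k\<in>{1..m}. \<iota> k \<noteq> i"
    proof (rule ccontr)
      assume "\<not> ?thesis"
      then have "\<iota> = D" using that unfolding D_def by (auto simp: PiE_iff extensional_def)
      then show False using False by simp
    qed
    then obtain k where "k \<in> {1..m}" "\<iota> k \<noteq> i" by blast
    then have "(\<Prod>k=1..m. (\<lambda>j. if j = i then c else 0) (\<iota> k)) = 0"
      by (intro prod_zero) auto
    then show ?thesis using False by simp
  qed
  have "tensor_form m n A (\<lambda>j. if j = i then c else 0) = (\<Sum>\<iota>\<in>{1..m} \<rightarrow>\<^sub>E {1..n}. if \<iota> = D then A \<iota> * c^m else 0)"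
    unfolding tensor_form_def
  proof (intro sum.cong refl)
    fix \<iota> assume "\<iota> \<in> {1..m} \<rightarrow>\<^sub>E {1..n}"
    then show "A \<iota> * (\<Prod>k=1..m. (\<lambda>j. if j = i then c else 0) (\<iota> k)) = (if \<iota> = D then A \<iota> * c^m else 0)"
      by (subst pr) auto
  qed
  also have "\<dots> = A D * c ^ m" using DM by (simp add: sum.delta' finite_PiE)
  finally show ?thesis by (simp add: D_def)
qed

lemma form_zero:
  assumes "m \<ge> 1"
  shows "tensor_form m n A (\<lambda>_. 0) = 0"
  unfolding tensor_form_def using assms by (simp add: zero_power)

lemma S_bounds:
  fixes \<iota> :: "nat \<Rightarrow> nat"
  assumes "\<iota> \<in> {1..m} \<rightarrow>\<^sub>E {1..n}"
  shows "m \<le> (\<Sum>k=1..m. \<iota> k)" "(\<Sum>k=1..m. \<iota> k) \<le> m * n"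
proof -
  have "(\<Sum>k=1..m. (1::nat)) \<le> (\<Sum>k=1..m. \<iota> k)"
    by (rule sum_mono) (use assms in auto)
  then show "m \<le> (\<Sum>k=1..m. \<iota> k)" by simp
  have "(\<Sum>k=1..m. \<iota> k) \<le> (\<Sum>k=1..m. n)"
    by (rule sum_mono) (use assms in auto)
  then show "(\<Sum>k=1..m. \<iota> k) \<le> m * n" by simp
qed

lemma diag_S: "(\<Sum>k=1..m. (\<lambda>k\<in>{1..m}. i) k) = m * (i::nat)"
proof -
  have "(\<Sum>k=1..m. (\<lambda>k\<in>{1..m}. i) k) = (\<Sum>k=1..m. i)" by (intro sum.cong) auto
  also have "\<dots> = m * i" by simp
  finally show ?thesis .
qed

lemma pos_of_diag:
  fixes g h :: real
  assumes d: "\<forall>i\<in>{1..n}. g + h * real (m * i) > 0" and n: "n \<ge> 1"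
  shows "\<forall>\<iota>\<in>{1..m} \<rightarrow>\<^sub>E {1..n}. g + h*real(\<Sum>k=1..m. \<iota> k) > 0"
proof
  fix \<iota> :: "nat \<Rightarrow> nat" assume \<iota>: "\<iota> \<in> {1..m} \<rightarrow>\<^sub>E {1..n}"
  define S where "S = real (\<Sum>k=1..m. \<iota> k)"
  have S1: "real m \<le> S" "S \<le> real m * real n"
    using S_bounds[OF \<iota>] unfolding S_def by (simp_all del: of_nat_sum) (metis of_nat_le_iff of_nat_mult)
  have a: "g + h * real m > 0" using d n by (metis atLeastAtMost_iff le_refl mult.right_neutral)
  have b: "g + h * (real m * real n) > 0" using d n by (metis atLeastAtMost_iff le_refl of_nat_mult)
  have "g + h * S > 0"
  proof (cases "h > 0")
    case True
    then have "h * real m \<le> h * S" using S1 by (intro mult_left_mono) auto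
    then show ?thesis using a by linarith
  next
    case False
    then have "h * (real m * real n) \<le> h * S" using S1 by (intro mult_left_mono_neg) auto
    then show ?thesis using b by linarith
  qed
  then show "g + h*real(\<Sum>k=1..m. \<iota> k) > 0" by (simp add: S_def)
qed

theorem theorem5p2:
  fixes m n :: nat and g h :: real
  assumes "even m" and "m \<ge> 2" and "n \<ge> 2"
    and "h \<noteq> 0" and "g / h \<notin> \<int>"
  shows "positive_definite m n (cauchy_hankel m g h)
     \<longleftrightarrow> strict_mono_incr_Rn_plus n (tensor_form m n (cauchy_hankel m g h))"
proof -
  let ?A = "cauchy_hankel m g h"
  let ?e = "\<lambda>i j. if j = i then (1::real) else 0"
  have fe: "tensor_form m n ?A (?e i) = 1 / (g + h * real (m * i))" if "i \<in> {1..n}" for i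
    using diag_form[OF that, of m ?A 1] by (simp add: cauchy_hankel_def diag_S del: of_nat_mult)
  have diag_pos: "g + h * real (m * i) > 0" if "i \<in> {1..n}" "tensor_form m n ?A (?e i) > 0" for i
    using fe[OF that(1)] that(2) by (simp del: of_nat_mult)
  have f0: "tensor_form m n ?A (\<lambda>_. 0) = 0" using assms by (intro form_zero) auto
  have pos_mono: "strict_mono_incr_Rn_plus n (tensor_form m n ?A)"
    if pos: "\<forall>\<iota>\<in>{1..m} \<rightarrow>\<^sub>E {1..n}. g + h*real(\<Sum>k=1..m. \<iota> k) > 0"
    unfolding strict_mono_incr_Rn_plus_def
  proof (intro allI impI)
    fix x y :: "nat \<Rightarrow> real"
    assume H: "nonneg_vec n x \<and> nonneg_vec n y \<and> (\<forall>i\<in>{1..n}. y i \<le> x i) \<and> (\<exists>i\<in>{1..n}. x i \<noteq> y i)"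
    then obtain j where j: "j \<in> {1..n}" "x j \<noteq> y j" by blast
    have y0: "\<forall>i\<in>{1..n}. 0 \<le> y i" and yx: "\<forall>i\<in>{1..n}. y i \<le> x i"
      using H by (auto simp: nonneg_vec_def)
    have Apos: "?A \<iota> > 0" if "\<iota> \<in> {1..m} \<rightarrow>\<^sub>E {1..n}" for \<iota>
      using pos that by (simp add: cauchy_hankel_def)
    define D where "D = (\<lambda>k\<in>{1..m}. j)"
    have DM: "D \<in> {1..m} \<rightarrow>\<^sub>E {1..n}" using j by (simp add: D_def)
    show "tensor_form m n ?A x > tensor_form m n ?A y"
      unfolding tensor_form_def
    proof (rule sum_strict_mono_ex1)
      show "finite ({1..m} \<rightarrow>\<^sub>E {1..n})" by (simp add: finite_PiE)
      show "\<forall>\<iota>\<in>{1..m} \<rightarrow>\<^sub>E {1..n}. ?A \<iota> * (\<Prod>k=1..m. y (\<iota> k)) \<le> ?A \<iota> * (\<Prod>k=1..m. x (\<iota> k))"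
      proof
        fix \<iota> assume \<iota>: "\<iota> \<in> {1..m} \<rightarrow>\<^sub>E {1..n}"
        have "(\<Prod>k=1..m. y (\<iota> k)) \<le> (\<Prod>k=1..m. x (\<iota> k))"
          by (rule prod_mono) (use \<iota> y0 yx in \<open>auto simp: PiE_iff\<close>)
        then show "?A \<iota> * (\<Prod>k=1..m. y (\<iota> k)) \<le> ?A \<iota> * (\<Prod>k=1..m. x (\<iota> k))"
          using Apos[OF \<iota>] by (intro mult_left_mono) auto
      qed
      have py: "(\<Prod>k=1..m. y (D k)) = y j ^ m" by (simp add: D_def)
      have px: "(\<Prod>k=1..m. x (D k)) = x j ^ m" by (simp add: D_def)
      have "y j < x j" using j yx by force
      then have "y j ^ m < x j ^ m" using y0 j assms(2) by (intro power_strict_mono) auto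
      then show "\<exists>\<iota>\<in>{1..m} \<rightarrow>\<^sub>E {1..n}. ?A \<iota> * (\<Prod>k=1..m. y (\<iota> k)) < ?A \<iota> * (\<Prod>k=1..m. x (\<iota> k))"
        using DM Apos[OF DM] py px by (intro bexI[of _ D]) auto
    qed
  qed
  show ?thesis
  proof
    assume pd: "positive_definite m n ?A"
    have "\<forall>i\<in>{1..n}. g + h * real (m * i) > 0"
    proof
      fix i assume i: "i \<in> {1..n}"
      have "nonzero_vec n (?e i)" using i by (auto simp: nonzero_vec_def)
      then show "g + h * real (m * i) > 0" using pd i diag_pos unfolding positive_definite_def by blast
    qed
    then show "strict_mono_incr_Rn_plus n (tensor_form m n ?A)"
      using pos_mono pos_of_diag assms(3) by simp
  next
    assume sm: "strict_mono_incr_Rn_plus n (tensor_form m n ?A)"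
    have "\<forall>i\<in>{1..n}. g + h * real (m * i) > 0"
    proof
      fix i assume i: "i \<in> {1..n}"
      have "tensor_form m n ?A (?e i) > tensor_form m n ?A (\<lambda>_. 0)"
        using sm i unfolding strict_mono_incr_Rn_plus_def
        by (elim allE[of _ "?e i"] allE[of _ "\<lambda>_. 0"]) (auto simp: nonneg_vec_def)
      then show "g + h * real (m * i) > 0" using f0 i diag_pos by simp
    qed
    then have "\<forall>\<iota>\<in>{1..m} \<rightarrow>\<^sub>E {1..n}. g + h*real(\<Sum>k=1..m. \<iota> k) > 0"
      using pos_of_diag assms(3) by simp
    then show "positive_definite m n ?A"
      unfolding positive_definite_def using pd_of_pos assms by blast
  qed
qed

end
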